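(* For every map $M$, the set of imbalances in $M$ is a class of homologous $(\bmod 2)$ cycles in the dual of $M$; that is, there is a cycle $c$ of $G_D$ such that the set of imbalances of $M$ (viewed as subsets of $SQ(M)=E(G_D)$) equals $\{c\triangle b: b\in V\}$, where $V$ is the coboundary space of $G_M$.
   Context: A map is a triple $M=(C_M,v_M,f_M)$ where $C_M$ is a finite cubic graph (multiple edges allowed) and $v_M,f_M$ are disjoint perfect matchings whose union is a disjoint union of 4-cycles, the squares ($SQ(M)$); $a_M$ is the third perfect matching. The vertices of $C_M$ are corners; $v_M(x)$, $a_M(x)$ denote the corner joined to $x$ by the corresponding edge. $G_M$ has vertices the cycles of $v_M\cup a_M$ and edges the squares (each joining the cycles containing its two $v_M$-edges); $G_D$ (graph of the dual $D=(C_M,f_M,v_M)$) has vertices the cycles of $f_M\cup a_M$ and edges the squares (each joining the cycles containing its two $f_M$-edges). A cycle is an edge set with all degrees even. Two cycles of $G_D$ are homologous if their symmetric difference is a boundary in the dual t-map, i.e. (with edge sets identified with $SQ(M)$) an element of the $GF(2)$-coboundary space $V$ of $G_M$. A balancing partition of $M$ is a partition $\{A,B\}$ of the corners such that $x$ and $v_M(x)$ are in different classes and $x$ and $a_M(v_M(x))$ are in the same class, for every corner $x$. A square is balanced if its opposite corners lie in the same class, unbalanced otherwise; an imbalance of $M$ is the set of unbalanced squares of some balancing partition. *)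

theory Defs
  imports Main
begin

text \<open>Maps are encoded by their set of corners X together with the three perfect
  matchings v, f, a given as fixed-point-free involutions on X (edge x -- g x).\<close>

definition is_map :: "'a set \<Rightarrow> ('a \<Rightarrow> 'a) \<Rightarrow> ('a \<Rightarrow> 'a) \<Rightarrow> ('a \<Rightarrow> 'a) \<Rightarrow> bool" where
  "is_map X v f a \<longleftrightarrow> finite X \<and>
     (\<forall>x\<in>X. v x \<in> X \<and> f x \<in> X \<and> a x \<in> X \<and>
        v (v x) = x \<and> f (f x) = x \<and> a (a x) = x \<and>
        v x \<noteq> x \<and> f x \<noteq> x \<and> a x \<noteq> x \<and>
        v x \<noteq> f x \<and> f (v (f (v x))) = x)"

text \<open>Corner set of the cycle of g \<union> h through x (connected component of the 2-factor).\<close>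
definition comp :: "'a set \<Rightarrow> ('a \<Rightarrow> 'a) \<Rightarrow> ('a \<Rightarrow> 'a) \<Rightarrow> 'a \<Rightarrow> 'a set" where
  "comp X g h x = {y. (x, y) \<in> ({(z, g z) | z. z \<in> X} \<union> {(z, h z) | z. z \<in> X})\<^sup>*}"

text \<open>The square (4-cycle of v \<union> f) through x, as a set of corners.\<close>
definition sq :: "('a \<Rightarrow> 'a) \<Rightarrow> ('a \<Rightarrow> 'a) \<Rightarrow> 'a \<Rightarrow> 'a set" where
  "sq v f x = {x, v x, f (v x), v (f (v x))}"

definition SQ :: "'a set \<Rightarrow> ('a \<Rightarrow> 'a) \<Rightarrow> ('a \<Rightarrow> 'a) \<Rightarrow> 'a set set" where
  "SQ X v f = sq v f ` X"

definition medges :: "('a \<Rightarrow> 'a) \<Rightarrow> 'a set \<Rightarrow> 'a set set" where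
  "medges g s = {{y, g y} | y. y \<in> s}"

text \<open>Degree of the vertex (cycle) w in the edge set c, where the ends of a square are
  its g-edges (loops counted twice).\<close>
definition deg :: "('a \<Rightarrow> 'a) \<Rightarrow> 'a set set \<Rightarrow> 'a set \<Rightarrow> nat" where
  "deg g c w = card {(s, e). s \<in> c \<and> e \<in> medges g s \<and> e \<subseteq> w}"

text \<open>Cycles of G_D: vertices are the cycles of f \<union> a, edges are squares joining the
  cycles containing their two f-edges.\<close>
definition D_cycle :: "'a set \<Rightarrow> ('a \<Rightarrow> 'a) \<Rightarrow> ('a \<Rightarrow> 'a) \<Rightarrow> ('a \<Rightarrow> 'a) \<Rightarrow> 'a set set \<Rightarrow> bool" where
  "D_cycle X v f a c \<longleftrightarrow> c \<subseteq> SQ X v f \<and> (\<forall>w \<in> comp X f a ` X. even (deg f c w))"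

text \<open>Coboundary in G_M (vertices = cycles of v \<union> a) of a vertex set S: squares having an
  odd number of ends (v-edges) in S.\<close>
definition cobound :: "'a set \<Rightarrow> ('a \<Rightarrow> 'a) \<Rightarrow> ('a \<Rightarrow> 'a) \<Rightarrow> ('a \<Rightarrow> 'a) \<Rightarrow> 'a set set \<Rightarrow> 'a set set" where
  "cobound X v f a S = {s \<in> SQ X v f. odd (card {e \<in> medges v s. \<exists>w\<in>S. e \<subseteq> w})}"

definition cobspace :: "'a set \<Rightarrow> ('a \<Rightarrow> 'a) \<Rightarrow> ('a \<Rightarrow> 'a) \<Rightarrow> ('a \<Rightarrow> 'a) \<Rightarrow> 'a set set set" where
  "cobspace X v f a = {cobound X v f a S | S. S \<subseteq> comp X v a ` X}"

definition balancing :: "'a set \<Rightarrow> ('a \<Rightarrow> 'a) \<Rightarrow> ('a \<Rightarrow> 'a) \<Rightarrow> 'a set \<Rightarrow> bool" where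
  "balancing X v a A \<longleftrightarrow> A \<subseteq> X \<and>
     (\<forall>x\<in>X. ((x \<in> A) \<noteq> (v x \<in> A)) \<and> ((x \<in> A) = (a (v x) \<in> A)))"

definition balanced :: "('a \<Rightarrow> 'a) \<Rightarrow> ('a \<Rightarrow> 'a) \<Rightarrow> 'a set \<Rightarrow> 'a set \<Rightarrow> bool" where
  "balanced v f A s \<longleftrightarrow>
     (\<forall>y\<in>s. \<forall>z\<in>s. z \<noteq> v y \<and> z \<noteq> f y \<longrightarrow> ((y \<in> A) \<longleftrightarrow> (z \<in> A)))"

definition imbalance :: "'a set \<Rightarrow> ('a \<Rightarrow> 'a) \<Rightarrow> ('a \<Rightarrow> 'a) \<Rightarrow> 'a set \<Rightarrow> 'a set set" where
  "imbalance X v f A = {s \<in> SQ X v f. \<not> balanced v f A s}"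

definition imbalances :: "'a set \<Rightarrow> ('a \<Rightarrow> 'a) \<Rightarrow> ('a \<Rightarrow> 'a) \<Rightarrow> ('a \<Rightarrow> 'a) \<Rightarrow> 'a set set set" where
  "imbalances X v f a = {imbalance X v f A | A. balancing X v a A}"

definition symdiff :: "'b set \<Rightarrow> 'b set \<Rightarrow> 'b set" where
  "symdiff A B = (A - B) \<union> (B - A)"

end

theory Submission
  imports Defs
begin

lemma two_to_one:
  assumes fin: "finite Y" and inv: "\<forall>y\<in>Y. g y \<in> Y \<and> g y \<noteq> y"
    and fib: "\<forall>y\<in>Y. \<forall>z\<in>Y. (\<phi> z = \<phi> y) = (z = y \<or> z = g y)"
  shows "card Y = 2 * card (\<phi> ` Y)"
proof -
  define B where "B = (\<lambda>b. {z\<in>Y. \<phi> z = b})"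
  have Y: "Y = \<Union>(B ` (\<phi> ` Y))" unfolding B_def by auto
  have c2: "card (B b) = 2" if bY: "b \<in> \<phi> ` Y" for b
  proof -
    obtain y where y: "y \<in> Y" "b = \<phi> y" using bY by auto
    have "B b = {y, g y}" using y fib inv unfolding B_def by auto
    then show ?thesis using inv y by auto
  qed
  have "card (\<Union>(B ` (\<phi> ` Y))) = (\<Sum>b\<in>\<phi> ` Y. card (B b))"
    by (rule card_UN_disjoint) (use fin in \<open>auto simp: B_def\<close>)
  also have "\<dots> = (\<Sum>b\<in>\<phi> ` Y. 2)" using c2 by (intro sum.cong) auto
  finally show ?thesis using Y by simp
qed

lemma comp_self: "x \<in> comp X g h x"
  unfolding comp_def by auto

lemma comp_sub:
  assumes "x \<in> X" "\<forall>z\<in>X. g z \<in> X \<and> h z \<in> X"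
  shows "comp X g h x \<subseteq> X"
proof
  fix y assume "y \<in> comp X g h x"
  then have "(x, y) \<in> ({(z, g z) | z. z \<in> X} \<union> {(z, h z) | z. z \<in> X})\<^sup>*"
    unfolding comp_def by auto
  then show "y \<in> X"
    by (induct rule: rtrancl_induct) (use assms in auto)
qed

lemma comp_closed:
  assumes "y \<in> comp X g h x" "y \<in> X"
  shows "g y \<in> comp X g h x" "h y \<in> comp X g h x"
  using assms unfolding comp_def
  by (auto intro: rtrancl_into_rtrancl)

lemma comp_min:
  assumes "x \<in> D" "\<forall>z\<in>D. g z \<in> D \<and> h z \<in> D"
  shows "comp X g h x \<subseteq> D"
proof
  fix y assume "y \<in> comp X g h x"
  then have "(x, y) \<in> ({(z, g z) | z. z \<in> X} \<union> {(z, h z) | z. z \<in> X})\<^sup>*"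
    unfolding comp_def by auto
  then show "y \<in> D"
    by (induct rule: rtrancl_induct) (use assms in auto)
qed

lemma card_le_inv:
  assumes "finite T" "\<forall>y\<in>S. g y \<in> T" "\<forall>y\<in>S. \<forall>z\<in>S. g y = g z \<longrightarrow> y = z"
  shows "card S \<le> card T"
  using assms by (intro card_inj_on_le[of g]) (auto simp: inj_on_def)

lemma card2:
  assumes "E1 \<noteq> E2"
  shows "card {e \<in> {E1, E2}. Q e} = (if Q E1 then 1 else 0) + (if Q E2 then 1 else (0::nat))"
proof (cases "Q E1"; cases "Q E2")
  assume "Q E1" "Q E2"
  then have "{e \<in> {E1, E2}. Q e} = {E1, E2}" by blast
  then show ?thesis using assms \<open>Q E1\<close> \<open>Q E2\<close> by simp
next
  assume "Q E1" "\<not> Q E2"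
  then have "{e \<in> {E1, E2}. Q e} = {E1}" by blast
  then show ?thesis using \<open>Q E1\<close> \<open>\<not> Q E2\<close> by simp
next
  assume "\<not> Q E1" "Q E2"
  then have "{e \<in> {E1, E2}. Q e} = {E2}" by blast
  then show ?thesis using \<open>\<not> Q E1\<close> \<open>Q E2\<close> by simp
next
  assume "\<not> Q E1" "\<not> Q E2"
  then have "{e \<in> {E1, E2}. Q e} = {}" by blast
  then show ?thesis using \<open>\<not> Q E1\<close> \<open>\<not> Q E2\<close> by simp
qed

locale mp =
  fixes X v f a
  assumes im: "is_map X v f a"
begin

lemma fin: "finite X" using im unfolding is_map_def by auto

lemma F:
  assumes "x \<in> X"
  shows "v x \<in> X" "f x \<in> X" "a x \<in> X" "v (v x) = x" "f (f x) = x" "a (a x) = x"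
    "v x \<noteq> x" "f x \<noteq> x" "a x \<noteq> x" "v x \<noteq> f x" "f (v (f (v x))) = x"
  using im assms unfolding is_map_def by auto

lemma fv: assumes "x \<in> X" shows "f (v x) = v (f x)"
proof -
  have "f (f (v (f (v x)))) = f x" using F(11)[OF assms] by simp
  moreover have "v (f (v x)) \<in> X" using F assms by simp
  ultimately have "v (f (v x)) = f x" using F(5) by metis
  then have "v (v (f (v x))) = v (f x)" by simp
  then show ?thesis using F assms by simp
qed

lemmas FS = F(1-9) fv

lemma sq_eq: "x \<in> X \<Longrightarrow> sq v f x = {x, v x, v (f x), f x}"
  unfolding sq_def using FS by simp

lemma dist:
  assumes "x \<in> X"
  shows "x \<noteq> v (f x)" "v x \<noteq> v (f x)" "v (f x) \<noteq> f x" "v x \<noteq> f x"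
proof -
  show "v x \<noteq> f x" using F assms by auto
  show "x \<noteq> v (f x)" using F assms by (metis fv)
  show "v x \<noteq> v (f x)" using F assms by metis
  show "v (f x) \<noteq> f x" using F assms by metis
qed

lemma sq_mem:
  assumes "x \<in> X" "y \<in> sq v f x"
  shows "y \<in> X" "sq v f y = sq v f x"
proof -
  have m: "y = x \<or> y = v x \<or> y = v (f x) \<or> y = f x" using assms sq_eq by auto
  then show "y \<in> X" using FS assms by auto
  have X2: "f x \<in> X" "v x \<in> X" "v (f x) \<in> X" using FS assms by auto
  from m show "sq v f y = sq v f x"
    apply (elim disjE)
    apply simp
    apply (simp add: sq_eq X2 assms FS; blast)
    apply (simp add: sq_eq X2 assms FS; blast)
    apply (simp add: sq_eq X2 assms FS; blast)
    done
qed

lemma balX: "balancing X v a A \<Longrightarrow> A \<subseteq> X"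
  unfolding balancing_def by (rule conjunct1)

lemma balF:
  assumes "balancing X v a A" "x \<in> X"
  shows "(v x \<in> A) = (x \<notin> A)" "(a x \<in> A) = (x \<notin> A)" "x \<in> A \<Longrightarrow> x \<in> X"
proof -
  have B: "\<forall>x\<in>X. ((x \<in> A) \<noteq> (v x \<in> A)) \<and> ((x \<in> A) = (a (v x) \<in> A))"
    using assms(1) unfolding balancing_def by (rule conjunct2)
  have vX: "v x \<in> X" "v (v x) = x" using FS assms(2) by auto
  have "(v x \<in> A) = (a (v (v x)) \<in> A)" "(x \<in> A) \<noteq> (v x \<in> A)" using B vX assms(2) by blast+
  then show "(v x \<in> A) = (x \<notin> A)" "(a x \<in> A) = (x \<notin> A)" unfolding vX by blast+
  show "x \<in> A \<Longrightarrow> x \<in> X" using balX[OF assms(1)] by blast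
qed

lemma bal_sq:
  assumes "balancing X v a A" "x \<in> X"
  shows "balanced v f A (sq v f x) = ((x \<in> A) \<noteq> (f x \<in> A))"
proof -
  have b: "(v x \<in> A) = (x \<notin> A)" "(v (f x) \<in> A) = (f x \<notin> A)"
    using balF assms FS by auto
  show ?thesis
  proof -
    have e: "v (v x) = x" "f (v x) = v (f x)" "v (v (f x)) = f x" "f (v (f x)) = v x" "f (f x) = x"
      using FS assms(2) FS[OF FS(2)[OF assms(2)]] by auto
    have d: "x \<noteq> v x" "x \<noteq> f x" "v x \<noteq> v (f x)" "v (f x) \<noteq> f x"
      "x \<noteq> v (f x)" "v x \<noteq> f x"
      using dist[OF assms(2)] FS[OF assms(2)] by metis+
    show ?thesis
      unfolding balanced_def sq_eq[OF assms(2)]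
      apply (simp only: ball_simps e)
      using d d[symmetric] b by auto
  qed
qed


lemma Ucl:
  assumes S: "S \<subseteq> comp X v a ` X" and y: "y \<in> X"
  shows "(v y \<in> \<Union>S) = (y \<in> \<Union>S)" "(a y \<in> \<Union>S) = (y \<in> \<Union>S)"
proof -
  have X1: "\<forall>z\<in>X. v z \<in> X \<and> a z \<in> X" using FS by auto
  have cl: "g y \<in> \<Union>S" if H: "y \<in> \<Union>S" "y \<in> X" "g = v \<or> g = a" for y g
  proof -
    obtain w where w: "w \<in> S" "y \<in> w" using H by auto
    then obtain z where "w = comp X v a z" using S by auto
    then show ?thesis using comp_closed[of y X v a z] w H by auto
  qed
  show "(v y \<in> \<Union>S) = (y \<in> \<Union>S)"
    using cl[of y v] cl[of "v y" v] y FS by auto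
  show "(a y \<in> \<Union>S) = (y \<in> \<Union>S)"
    using cl[of y a] cl[of "a y" a] y FS by auto
qed

lemma Usub: "S \<subseteq> comp X v a ` X \<Longrightarrow> \<Union>S \<subseteq> X"
  using comp_sub[of _ X v a] FS by blast

lemma edge_in:
  assumes S: "S \<subseteq> comp X v a ` X" and y: "y \<in> X"
  shows "(\<exists>w\<in>S. {y, v y} \<subseteq> w) = (y \<in> \<Union>S)"
proof
  assume "\<exists>w\<in>S. {y, v y} \<subseteq> w" then show "y \<in> \<Union>S" by auto
next
  assume "y \<in> \<Union>S"
  then obtain w where w: "w \<in> S" "y \<in> w" by auto
  then obtain z where "w = comp X v a z" using S by auto
  then have "v y \<in> w" using comp_closed[of y X v a z] w y by auto
  then show "\<exists>w\<in>S. {y, v y} \<subseteq> w" using w by auto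
qed

lemma medges_v:
  assumes "x \<in> X"
  shows "medges v (sq v f x) = {{x, v x}, {f x, v (f x)}}"
proof -
  have e: "v (v x) = x" "v (v (f x)) = f x" using FS assms by auto
  have "medges v (sq v f x) = {{x, v x}, {v x, v (v x)}, {v (f x), v (v (f x))}, {f x, v (f x)}}"
    unfolding medges_def sq_eq[OF assms] by blast
  then show ?thesis unfolding e by (simp add: insert_commute)
qed

lemma cob:
  assumes S: "S \<subseteq> comp X v a ` X" and x: "x \<in> X"
  shows "(sq v f x \<in> cobound X v f a S) = ((x \<in> \<Union>S) \<noteq> (f x \<in> \<Union>S))"
proof -
  have inSQ: "sq v f x \<in> SQ X v f" unfolding SQ_def using x by auto
  have n1: "x \<noteq> f x" "x \<noteq> v (f x)" using dist(1)[OF x] F(8)[OF x] by auto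
  have ne: "{x, v x} \<noteq> {f x, v (f x)}"
  proof
    assume "{x, v x} = {f x, v (f x)}"
    then have "x \<in> {f x, v (f x)}" by blast
    then show False using n1 by blast
  qed
  have i1: "(\<exists>w\<in>S. {x, v x} \<subseteq> w) = (x \<in> \<Union>S)" by (rule edge_in[OF S x])
  have i2: "(\<exists>w\<in>S. {f x, v (f x)} \<subseteq> w) = (f x \<in> \<Union>S)" by (rule edge_in[OF S FS(2)[OF x]])
  have "card {e \<in> medges v (sq v f x). \<exists>w\<in>S. e \<subseteq> w} =
        (if x \<in> \<Union>S then 1 else 0) + (if f x \<in> \<Union>S then 1 else (0::nat))"
    unfolding medges_v[OF x] card2[OF ne, of "\<lambda>e. \<exists>w\<in>S. e \<subseteq> w"] i1 i2 by (rule refl)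
  then have "odd (card {e \<in> medges v (sq v f x). \<exists>w\<in>S. e \<subseteq> w}) = ((x \<in> \<Union>S) \<noteq> (f x \<in> \<Union>S))"
    by simp
  moreover have "(sq v f x \<in> cobound X v f a S) = odd (card {e \<in> medges v (sq v f x). \<exists>w\<in>S. e \<subseteq> w})"
    unfolding cobound_def using inSQ by (simp only: mem_Collect_eq simp_thms)
  ultimately show ?thesis by simp
qed

lemma flip:
  assumes bal: "balancing X v a A" and S: "S \<subseteq> comp X v a ` X"
  shows "balancing X v a (symdiff A (\<Union>S))"
    "imbalance X v f (symdiff A (\<Union>S)) = symdiff (imbalance X v f A) (cobound X v f a S)"
proof -
  let ?U = "\<Union>S"
  let ?B = "symdiff A ?U"
  have AX: "A \<subseteq> X" using balX[OF bal] .
  have UX: "?U \<subseteq> X" using Usub S .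
  have mem: "(y \<in> ?B) = ((y \<in> A) \<noteq> (y \<in> ?U))" for y unfolding symdiff_def by auto
  show balB: "balancing X v a ?B"
    unfolding balancing_def
  proof (intro conjI ballI)
    show "?B \<subseteq> X" using AX UX unfolding symdiff_def by auto
  next
    fix x assume x: "x \<in> X"
    have vX: "v x \<in> X" using FS x by auto
    have h1: "(v x \<in> A) = (x \<notin> A)" by (rule balF(1)[OF bal x])
    have h2: "(a (v x) \<in> A) = (v x \<notin> A)" by (rule balF(2)[OF bal vX])
    have h3: "(v x \<in> ?U) = (x \<in> ?U)" by (rule Ucl(1)[OF S x])
    have h4: "(a (v x) \<in> ?U) = (v x \<in> ?U)" by (rule Ucl(2)[OF S vX])
    show "(x \<in> ?B) \<noteq> (v x \<in> ?B)" unfolding mem h1 h3 by blast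
    show "(x \<in> ?B) = (a (v x) \<in> ?B)" unfolding mem h2 h4 h1 h3 by blast
  qed
  show "imbalance X v f ?B = symdiff (imbalance X v f A) (cobound X v f a S)"
  proof (rule set_eqI)
    fix s
    show "(s \<in> imbalance X v f ?B) = (s \<in> symdiff (imbalance X v f A) (cobound X v f a S))"
    proof (cases "s \<in> SQ X v f")
      case False
      then show ?thesis unfolding imbalance_def symdiff_def cobound_def by auto
    next
      case True
      then obtain x where x: "x \<in> X" "s = sq v f x" unfolding SQ_def by auto
      have g1: "(s \<in> imbalance X v f ?B) = ((x \<in> ?B) = (f x \<in> ?B))"
        unfolding imbalance_def x(2) using bal_sq[OF balB x(1)] True x(2) by simp
      have g2: "(s \<in> imbalance X v f A) = ((x \<in> A) = (f x \<in> A))"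
        unfolding imbalance_def x(2) using bal_sq[OF bal x(1)] True x(2) by simp
      have g3: "(s \<in> cobound X v f a S) = ((x \<in> ?U) \<noteq> (f x \<in> ?U))"
        unfolding x(2) by (rule cob[OF S x(1)])
      have g4: "(s \<in> symdiff (imbalance X v f A) (cobound X v f a S)) =
          ((s \<in> imbalance X v f A) \<noteq> (s \<in> cobound X v f a S))"
        unfolding symdiff_def by blast
      show ?thesis unfolding g4 g1 g2 g3 mem by blast
    qed
  qed
qed


lemma deg_even:
  assumes bal: "balancing X v a A" and x0: "x0 \<in> X"
  shows "even (deg f (imbalance X v f A) (comp X f a x0))"
proof -
  define W where "W = comp X f a x0"
  define c where "c = imbalance X v f A"
  have WX: "W \<subseteq> X" unfolding W_def using comp_sub[of x0 X f a] x0 FS by auto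
  have finW: "finite W" using WX fin finite_subset by auto
  have Wcl: "f y \<in> W" "a y \<in> W" if "y \<in> W" for y
    using comp_closed[of y X f a x0] that WX unfolding W_def by auto
  define M where "M = {y \<in> W. (y \<in> A) = (f y \<in> A)}"
  define \<phi> where "\<phi> y = (sq v f y, {y, f y})" for y
  have P: "{(s, e). s \<in> c \<and> e \<in> medges f s \<and> e \<subseteq> W} = \<phi> ` M"
  proof (rule set_eqI; rule iffI)
    fix p assume "p \<in> {(s, e). s \<in> c \<and> e \<in> medges f s \<and> e \<subseteq> W}"
    then obtain s e where p: "p = (s, e)" "s \<in> c" "e \<in> medges f s" "e \<subseteq> W" by auto
    obtain x1 where x1: "x1 \<in> X" "s = sq v f x1" using p(2) unfolding c_def imbalance_def SQ_def by auto
    obtain y where y: "y \<in> s" "e = {y, f y}" using p(3) unfolding medges_def by auto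
    have yX: "y \<in> X" and sy: "sq v f y = s" using sq_mem[OF x1(1)] y x1 by auto
    have "\<not> balanced v f A (sq v f y)" using p(2) sy unfolding c_def imbalance_def by auto
    then have "(y \<in> A) = (f y \<in> A)" using bal_sq[OF bal yX] by auto
    then have "y \<in> M" using p(4) y unfolding M_def by auto
    then show "p \<in> \<phi> ` M" using p sy y unfolding \<phi>_def by auto
  next
    fix p assume "p \<in> \<phi> ` M"
    then obtain y where y: "y \<in> M" "p = \<phi> y" by auto
    have yX: "y \<in> X" using y WX unfolding M_def by auto
    have "sq v f y \<in> c" using bal_sq[OF bal yX] y(1) yX unfolding c_def imbalance_def M_def SQ_def by auto
    moreover have "{y, f y} \<in> medges f (sq v f y)" unfolding medges_def sq_eq[OF yX] by auto
    moreover have "{y, f y} \<subseteq> W" using y(1) Wcl unfolding M_def by auto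
    ultimately show "p \<in> {(s, e). s \<in> c \<and> e \<in> medges f s \<and> e \<subseteq> W}" using y unfolding \<phi>_def by auto
  qed
  define MA where "MA = M \<inter> A"
  define MB where "MB = M - A"
  have finM: "finite M" using finW unfolding M_def by auto
  have MX: "M \<subseteq> X" using WX unfolding M_def by auto
  have fib: "\<forall>y\<in>Y. \<forall>z\<in>Y. (\<phi> z = \<phi> y) = (z = y \<or> z = f y)" if "Y \<subseteq> X" for Y
  proof (intro ballI)
    fix y z assume yz: "y \<in> Y" "z \<in> Y"
    then have yX: "y \<in> X" "z \<in> X" using that by auto
    have "sq v f (f y) = sq v f y" using sq_mem[OF yX(1), of "f y"] sq_eq[OF yX(1)] by auto
    moreover have "{z, f z} = {y, f y} \<Longrightarrow> z = y \<or> z = f y" by auto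
    ultimately show "(\<phi> z = \<phi> y) = (z = y \<or> z = f y)" unfolding \<phi>_def using FS[OF yX(1)]
      by (auto simp: insert_commute)
  qed
  have MAX: "MA \<subseteq> X" "MB \<subseteq> X" using MX unfolding MA_def MB_def by auto
  have cA: "card MA = 2 * card (\<phi> ` MA)"
    by (rule two_to_one[OF _ _ fib[OF MAX(1)]]) (use finM MX FS Wcl in \<open>auto simp: MA_def M_def\<close>)
  have cB: "card MB = 2 * card (\<phi> ` MB)"
    by (rule two_to_one[OF _ _ fib[OF MAX(2)]]) (use finM MX FS Wcl in \<open>auto simp: MB_def M_def\<close>)
  have disj: "\<phi> ` MA \<inter> \<phi> ` MB = {}"
  proof (rule ccontr)
    assume "\<phi> ` MA \<inter> \<phi> ` MB \<noteq> {}"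
    then obtain y z where yz: "y \<in> MA" "z \<in> MB" "\<phi> y = \<phi> z" by blast
    then have "{y, f y} = {z, f z}" unfolding \<phi>_def by auto
    then have "z = y \<or> z = f y" by auto
    then show False using yz unfolding MA_def MB_def M_def by auto
  qed
  have MAB: "\<phi> ` M = \<phi> ` MA \<union> \<phi> ` MB" unfolding MA_def MB_def by auto
  define BA where "BA = {y \<in> W \<inter> A. f y \<notin> A}"
  define BB where "BB = {y \<in> W - A. f y \<in> A}"
  have aA: "(a y \<in> A) = (y \<notin> A)" if "y \<in> X" for y using balF bal that by auto
  have fWA: "finite (W \<inter> A)" "finite (W - A)" using finW by auto
  have "card (W \<inter> A) \<le> card (W - A)"
    by (rule card_le_inv[of _ _ a]) (use fWA Wcl aA WX FS in \<open>auto simp: subset_iff\<close>, metis FS(6) IntD1 WX subsetD)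
  moreover have "card (W - A) \<le> card (W \<inter> A)"
    by (rule card_le_inv[of _ _ a]) (use fWA Wcl aA WX FS in \<open>auto simp: subset_iff\<close>, metis DiffD1 FS(6) WX subsetD)
  ultimately have e1: "card (W \<inter> A) = card (W - A)" by simp
  have fB: "finite BA" "finite BB" using finW unfolding BA_def BB_def by auto
  have "card BA \<le> card BB"
    by (rule card_le_inv[of _ _ f]) (use fB Wcl WX FS in \<open>auto simp: BA_def BB_def subset_iff\<close>, metis FS(5) IntD1 WX subsetD)
  moreover have "card BB \<le> card BA"
    by (rule card_le_inv[of _ _ f]) (use fB Wcl WX FS in \<open>auto simp: BA_def BB_def subset_iff\<close>, metis DiffD1 FS(5) WX subsetD)
  ultimately have e2: "card BA = card BB" by simp
  have "W \<inter> A = MA \<union> BA" "MA \<inter> BA = {}" unfolding MA_def BA_def M_def by auto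
  then have e3: "card (W \<inter> A) = card MA + card BA" using fWA
    by (metis card_Un_disjoint finite_Un)
  have "W - A = MB \<union> BB" "MB \<inter> BB = {}" unfolding MB_def BB_def M_def by auto
  then have e4: "card (W - A) = card MB + card BB" using fWA
    by (metis card_Un_disjoint finite_Un)
  have "card MA = card MB" using e1 e2 e3 e4 by simp
  then have eq: "card (\<phi> ` MA) = card (\<phi> ` MB)" using cA cB by simp
  have "card (\<phi> ` M) = card (\<phi> ` MA) + card (\<phi> ` MB)"
    unfolding MAB by (rule card_Un_disjoint) (use finM disj in \<open>auto simp: MA_def MB_def\<close>)
  then have "even (card (\<phi> ` M))" using eq by simp
  then show ?thesis unfolding deg_def P[unfolded c_def W_def] W_def c_def using P unfolding c_def W_def by simp
qed


abbreviation "tau \<equiv> (\<lambda>z. a (v z))"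
abbreviation "sig \<equiv> (\<lambda>z. v (a z))"

lemma ts: "z \<in> X \<Longrightarrow> tau (sig z) = z" "z \<in> X \<Longrightarrow> sig (tau z) = z"
  using FS by auto

lemma powX: "x \<in> X \<Longrightarrow> (tau ^^ k) x \<in> X" "x \<in> X \<Longrightarrow> (sig ^^ k) x \<in> X"
  by (induct k) (auto simp: FS)

lemma tau_pow: "\<forall>x\<in>X. (tau ^^ k) x \<noteq> v x \<and> (tau ^^ Suc k) x \<noteq> v x"
proof (induct k)
  case 0
  show ?case using FS by (metis funpow_0 funpow.simps(2) comp_apply)
next
  case (Suc k)
  show ?case
  proof (intro ballI conjI)
    fix x assume x: "x \<in> X"
    show "(tau ^^ Suc k) x \<noteq> v x" using Suc x by blast
    show "(tau ^^ Suc (Suc k)) x \<noteq> v x"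
    proof
      assume h: "(tau ^^ Suc (Suc k)) x = v x"
      define y where "y = (tau ^^ k) (tau x)"
      have tx: "tau x \<in> X" using x FS by auto
      have yX: "y \<in> X" unfolding y_def using powX tx by auto
      have "(tau ^^ Suc k) x = y" unfolding y_def by (simp only: funpow_Suc_right comp_apply)
      then have "(tau ^^ Suc (Suc k)) x = tau y" by simp
      then have "tau y = v x" using h by simp
      then have "sig (tau y) = sig (v x)" by simp
      then have "y = v (tau x)" using ts yX by simp
      then show False using Suc tx unfolding y_def by blast
    qed
  qed
qed

lemma vsig: "x \<in> X \<Longrightarrow> v ((sig ^^ k) x) = (tau ^^ k) (v x)"
proof (induct k)
  case 0 then show ?case by simp
next
  case (Suc k)
  have "(sig ^^ k) x \<in> X" using powX Suc by auto
  have "v ((sig ^^ Suc k) x) = a ((sig ^^ k) x)" using FS \<open>(sig ^^ k) x \<in> X\<close> by simp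
  also have "\<dots> = a (v (v ((sig ^^ k) x)))" using FS \<open>(sig ^^ k) x \<in> X\<close> by simp
  also have "\<dots> = (tau ^^ Suc k) (v x)" using Suc by simp
  finally show ?case .
qed

lemma sig_pow: "x \<in> X \<Longrightarrow> (sig ^^ k) x \<noteq> v x"
proof
  assume x: "x \<in> X" and h: "(sig ^^ k) x = v x"
  have "(tau ^^ k) (v x) = v (v x)" using vsig[OF x, of k] h FS x by simp
  then show False using tau_pow FS x by blast
qed

lemma path:
  assumes "y \<in> comp X tau sig x" "x \<in> X"
  shows "\<exists>i. y = (tau ^^ i) x \<or> y = (sig ^^ i) x"
proof -
  have "(x, y) \<in> ({(z, tau z) | z. z \<in> X} \<union> {(z, sig z) | z. z \<in> X})\<^sup>*"
    using assms unfolding comp_def by auto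
  then show ?thesis
  proof (induct rule: rtrancl_induct)
    case base
    show ?case by (metis funpow_0)
  next
    case (step y z)
    from step(3) obtain i where i: "y = (tau ^^ i) x \<or> y = (sig ^^ i) x" by blast
    from step(2) have yX: "y \<in> X" and z: "z = tau y \<or> z = sig y" by auto
    show ?case
    proof (cases i)
      case 0
      have "z = (tau ^^ 1) x \<or> z = (sig ^^ 1) x" using i z 0 by simp
      then show ?thesis by blast
    next
      case (Suc j)
      have jX: "(tau ^^ j) x \<in> X" "(sig ^^ j) x \<in> X" using powX assms(2) by auto
      show ?thesis using i z
      proof (elim disjE)
        assume "y = (tau ^^ i) x" "z = tau y"
        then show ?thesis by (metis funpow.simps(2) comp_apply)
      next
        assume "y = (tau ^^ i) x" "z = sig y"
        then have "z = (tau ^^ j) x" using Suc ts jX by simp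
        then show ?thesis by blast
      next
        assume "y = (sig ^^ i) x" "z = tau y"
        then have "z = (sig ^^ j) x" using Suc ts jX by simp
        then show ?thesis by blast
      next
        assume "y = (sig ^^ i) x" "z = sig y"
        then show ?thesis by (metis funpow.simps(2) comp_apply)
      qed
    qed
  qed
qed

lemma not_vx: "x \<in> X \<Longrightarrow> v x \<notin> comp X tau sig x"
proof
  assume x: "x \<in> X" and "v x \<in> comp X tau sig x"
  then obtain i where "v x = (tau ^^ i) x \<or> v x = (sig ^^ i) x" using path by blast
  then show False using sig_pow[OF x, of i] tau_pow x by metis
qed

lemma osub: "x \<in> X \<Longrightarrow> comp X tau sig x \<subseteq> X"
  by (rule comp_sub) (auto simp: FS)

lemma osym:
  assumes "y \<in> comp X tau sig x"
  shows "x \<in> comp X tau sig y"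
proof -
  let ?R = "{(z, tau z) | z. z \<in> X} \<union> {(z, sig z) | z. z \<in> X}"
  have "sym ?R"
  proof (rule symI)
    fix p q assume "(p, q) \<in> ?R"
    then show "(q, p) \<in> ?R"
    proof
      assume "(p, q) \<in> {(z, tau z) | z. z \<in> X}"
      then have "p \<in> X" "q = tau p" by auto
      then have "q \<in> X" "p = sig q" using FS ts by auto
      then show ?thesis by auto
    next
      assume "(p, q) \<in> {(z, sig z) | z. z \<in> X}"
      then have "p \<in> X" "q = sig p" by auto
      then have "q \<in> X" "p = tau q" using FS ts by auto
      then show ?thesis by auto
    qed
  qed
  then have "sym (?R\<^sup>*)" by (rule sym_rtrancl)
  then show ?thesis using assms unfolding comp_def by (auto dest: symD)
qed

lemma oeq:
  assumes "y \<in> comp X tau sig x" "x \<in> X"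
  shows "comp X tau sig y = comp X tau sig x"
proof
  have cl: "\<forall>z\<in>comp X tau sig w. tau z \<in> comp X tau sig w \<and> sig z \<in> comp X tau sig w" if "w \<in> X" for w
    using comp_closed[of _ X tau sig w] osub[OF that] by blast
  have yX: "y \<in> X" using osub assms by auto
  show "comp X tau sig y \<subseteq> comp X tau sig x"
    by (rule comp_min) (use assms cl in auto)
  show "comp X tau sig x \<subseteq> comp X tau sig y"
    by (rule comp_min) (use osym[OF assms(1)] cl yX in auto)
qed

lemma exists_bal: "\<exists>A. balancing X v a A"
proof -
  define Ob where "Ob y = comp X tau sig y" for y
  define A where "A = {y \<in> X. Ob y = (SOME P. P \<in> {Ob y, Ob (v y)})}"
  have "balancing X v a A"
    unfolding balancing_def
  proof (intro conjI ballI)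
    show "A \<subseteq> X" unfolding A_def by auto
  next
    fix x assume x: "x \<in> X"
    define P where "P = (SOME P. P \<in> {Ob x, Ob (v x)})"
    have P: "P \<in> {Ob x, Ob (v x)}" unfolding P_def by (rule someI) auto
    have ne: "Ob x \<noteq> Ob (v x)" using not_vx[OF x] comp_self[of "v x" X tau sig] unfolding Ob_def by auto
    have Pv: "(SOME P. P \<in> {Ob (v x), Ob (v (v x))}) = P" unfolding P_def using FS x by (simp add: insert_commute)
    have vX: "v x \<in> X" using FS x by auto
    show "(x \<in> A) \<noteq> (v x \<in> A)"
      using P ne Pv x vX unfolding A_def P_def by auto
    have t1: "Ob (tau x) = Ob x" unfolding Ob_def
      by (rule oeq[OF _ x]) (use comp_closed[of x X tau sig x] comp_self[of x X tau sig] x in auto)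
    have t2: "Ob (v (tau x)) = Ob (v x)" unfolding Ob_def
    proof (rule oeq[OF _ vX])
      have "sig (v x) \<in> comp X tau sig (v x)" using comp_closed[of "v x" X tau sig "v x"] comp_self[of "v x" X tau sig] vX by auto
      then show "v (tau x) \<in> comp X tau sig (v x)" using FS x by simp
    qed
    have tX: "tau x \<in> X" using FS x by auto
    show "(x \<in> A) = (a (v x) \<in> A)" unfolding A_def using t1 t2 x tX by simp
  qed
  then show ?thesis by blast
qed

end

theorem theorem4p3:
  assumes "is_map X v f a"
  shows "\<exists>c. D_cycle X v f a c \<and>
           imbalances X v f a = (\<lambda>b. symdiff c b) ` cobspace X v f a"
proof -
  interpret mp X v f a using assms by (rule mp.intro)
  obtain A0 where A0: "balancing X v a A0" using exists_bal by blast
  define c where "c = imbalance X v f A0"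
  have D: "D_cycle X v f a c"
    unfolding D_cycle_def c_def using deg_even[OF A0] by (auto simp: imbalance_def)
  have "imbalances X v f a = (\<lambda>b. symdiff c b) ` cobspace X v f a"
  proof (rule set_eqI; rule iffI)
    fix I assume "I \<in> imbalances X v f a"
    then obtain A where A: "balancing X v a A" "I = imbalance X v f A" unfolding imbalances_def by auto
    define Dd where "Dd = symdiff A A0"
    have AX: "A \<subseteq> X" "A0 \<subseteq> X" using balX A A0 by auto
    have DX: "Dd \<subseteq> X" using AX unfolding Dd_def symdiff_def by auto
    define S where "S = comp X v a ` Dd"
    have S: "S \<subseteq> comp X v a ` X" unfolding S_def using DX by auto
    have Dcl: "\<forall>z\<in>Dd. v z \<in> Dd \<and> a z \<in> Dd"
    proof
      fix z assume z: "z \<in> Dd"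
      then have zX: "z \<in> X" using DX by auto
      show "v z \<in> Dd \<and> a z \<in> Dd" using balF[OF A(1) zX] balF[OF A0 zX] z unfolding Dd_def symdiff_def by auto
    qed
    have US: "\<Union>S = Dd"
    proof
      show "\<Union>S \<subseteq> Dd" unfolding S_def using comp_min[of _ Dd v a X] Dcl by blast
      show "Dd \<subseteq> \<Union>S" unfolding S_def using comp_self[of _ X v a] by blast
    qed
    have "symdiff A0 (\<Union>S) = A" unfolding US Dd_def symdiff_def by auto
    then have "I = symdiff c (cobound X v f a S)" using flip(2)[OF A0 S] A(2) c_def by simp
    moreover have "cobound X v f a S \<in> cobspace X v f a" unfolding cobspace_def using S by auto
    ultimately show "I \<in> (\<lambda>b. symdiff c b) ` cobspace X v f a" by auto
  next
    fix I assume "I \<in> (\<lambda>b. symdiff c b) ` cobspace X v f a"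
    then obtain S where S: "S \<subseteq> comp X v a ` X" "I = symdiff c (cobound X v f a S)"
      unfolding cobspace_def by auto
    show "I \<in> imbalances X v f a"
      unfolding imbalances_def using flip[OF A0 S(1)] S(2) c_def by auto
  qed
  with D show ?thesis by blast
qed

end
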